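(* Let $G$ be an infinite group and $A\subseteq G$. Then: (i) for $n\in\mathbb{N}$, $A$ is $n$-thin if and only if $|Y|\le n$ for every $Y\in W(A)$; (ii) $A$ is sparse if and only if every $Y\in W(A)$ is finite; (iii) $A$ is scattered if and only if for every subset $B\subseteq A$ there exists a finite subset $Y$ of $G$ lying in the closure (in $\mathcal{P}_G$) of $\{Bb^{-1}: b\in B\}$.
   Context: Identify $\mathcal{P}_G$ with $\{0,1\}^G$ with the product topology, a $G$-space under $(A,g)\mapsto Ag$. For $X\in\mathcal{P}_G$: $[U]_X=\{g: Xg\in U\}$, $T(X)$ is the closure of $\{Xg:g\in G\}$, and $W(X)=\{Y\in T(X): [U]_X$ infinite for every neighbourhood $U$ of $Y\}$. $A$ is $n$-thin if for all distinct $g_0,\dots,g_n\in G$ the set $g_0A\cap\dots\cap g_nA$ is finite. $A$ is sparse if for every infinite $X\subseteq G$ there is finite $F\subseteq X$ with $\bigcap_{g\in F}gA$ finite. Identify $\beta G$ with the set of ultrafilters on $G$ with its usual semigroup extension of the multiplication ($gp=\{gP:P\in p\}$); $G^*$ is the set of free ultrafilters and for $X\subseteq G$, $X^*=\{p\in G^*: X\in p\}$. For $p\in G^*$, $\Delta_p(X)=X^*\cap Gp=\{gp: g\in G, X\in gp\}$. $A$ is scattered if for every infinite $X\subseteq A$ there is $p\in X^*$ with $\Delta_p(X)$ finite. *)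

theory Defs
  imports "HOL-Analysis.Analysis" "HOL-Algebra.Algebra"
begin

text \<open>A subset S of G is identified
  with its characteristic function chi G S.\<close>

definition PG :: "('a, 'b) monoid_scheme \<Rightarrow> ('a \<Rightarrow> bool) topology" where
  "PG G = product_topology (\<lambda>i. discrete_topology (UNIV :: bool set)) (carrier G)"

definition chi :: "('a, 'b) monoid_scheme \<Rightarrow> 'a set \<Rightarrow> ('a \<Rightarrow> bool)" where
  "chi G S = restrict (\<lambda>x. x \<in> S) (carrier G)"

text \<open>[U]_X = {g. Xg \<in> U}, the action being right translation S g = S #> g.\<close>
definition hits :: "('a, 'b) monoid_scheme \<Rightarrow> ('a \<Rightarrow> bool) set \<Rightarrow> 'a set \<Rightarrow> 'a set" where
  "hits G U S = {g \<in> carrier G. chi G (S #>\<^bsub>G\<^esub> g) \<in> U}"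

definition Torb :: "('a, 'b) monoid_scheme \<Rightarrow> 'a set \<Rightarrow> 'a set set" where
  "Torb G S = {Y. Y \<subseteq> carrier G \<and>
     chi G Y \<in> (PG G) closure_of (chi G ` {S #>\<^bsub>G\<^esub> g | g. g \<in> carrier G})}"

definition Wset :: "('a, 'b) monoid_scheme \<Rightarrow> 'a set \<Rightarrow> 'a set set" where
  "Wset G S = {Y \<in> Torb G S. \<forall>U. (\<exists>V. openin (PG G) V \<and> chi G Y \<in> V \<and> V \<subseteq> U)
                 \<longrightarrow> infinite (hits G U S)}"

definition n_thin :: "('a, 'b) monoid_scheme \<Rightarrow> nat \<Rightarrow> 'a set \<Rightarrow> bool" where
  "n_thin G n A \<longleftrightarrow> (\<forall>F. F \<subseteq> carrier G \<and> card F = Suc n \<longrightarrow>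
        finite (\<Inter>g\<in>F. g <#\<^bsub>G\<^esub> A))"

definition sparse :: "('a, 'b) monoid_scheme \<Rightarrow> 'a set \<Rightarrow> bool" where
  "sparse G A \<longleftrightarrow> (\<forall>S. S \<subseteq> carrier G \<and> infinite S \<longrightarrow>
        (\<exists>F. F \<subseteq> S \<and> finite F \<and> finite (carrier G \<inter> (\<Inter>g\<in>F. g <#\<^bsub>G\<^esub> A))))"

definition ultrafilter_on :: "('a, 'b) monoid_scheme \<Rightarrow> 'a set set \<Rightarrow> bool" where
  "ultrafilter_on G p \<longleftrightarrow> p \<subseteq> Pow (carrier G) \<and> carrier G \<in> p \<and> {} \<notin> p \<and>
     (\<forall>P\<in>p. \<forall>Q\<in>p. P \<inter> Q \<in> p) \<and>
     (\<forall>P\<in>p. \<forall>Q. P \<subseteq> Q \<and> Q \<subseteq> carrier G \<longrightarrow> Q \<in> p) \<and>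
     (\<forall>P. P \<subseteq> carrier G \<longrightarrow> P \<in> p \<or> carrier G - P \<in> p)"

definition free_ultrafilter_on :: "('a, 'b) monoid_scheme \<Rightarrow> 'a set set \<Rightarrow> bool" where
  "free_ultrafilter_on G p \<longleftrightarrow> ultrafilter_on G p \<and> (\<forall>P\<in>p. infinite P)"

definition uf_lmult :: "('a, 'b) monoid_scheme \<Rightarrow> 'a \<Rightarrow> 'a set set \<Rightarrow> 'a set set" where
  "uf_lmult G g p = (\<lambda>P. g <#\<^bsub>G\<^esub> P) ` p"

definition Delta :: "('a, 'b) monoid_scheme \<Rightarrow> 'a set set \<Rightarrow> 'a set \<Rightarrow> 'a set set set" where
  "Delta G p S = {uf_lmult G g p | g. g \<in> carrier G \<and> S \<in> uf_lmult G g p}"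

definition scattered :: "('a, 'b) monoid_scheme \<Rightarrow> 'a set \<Rightarrow> bool" where
  "scattered G A \<longleftrightarrow> (\<forall>S. S \<subseteq> A \<and> infinite S \<longrightarrow>
        (\<exists>p. free_ultrafilter_on G p \<and> S \<in> p \<and> finite (Delta G p S)))"

end

theory Submission
  imports Defs
begin


lemma (in group) rcos_mem_iff:
  assumes "S \<subseteq> carrier G" "g \<in> carrier G" "x \<in> carrier G"
  shows "x \<in> S #> g \<longleftrightarrow> x \<otimes> inv g \<in> S"
proof
  assume "x \<in> S #> g"
  then obtain s where "s \<in> S" "x = s \<otimes> g" by (auto simp: r_coset_def)
  then show "x \<otimes> inv g \<in> S" using assms by (simp add: m_assoc subsetD)
next
  assume "x \<otimes> inv g \<in> S"
  moreover have "x = (x \<otimes> inv g) \<otimes> g" using assms by (simp add: m_assoc)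
  ultimately show "x \<in> S #> g" unfolding r_coset_def by blast
qed

lemma (in group) lcos_mem_iff:
  assumes "S \<subseteq> carrier G" "g \<in> carrier G" "x \<in> carrier G"
  shows "x \<in> g <# S \<longleftrightarrow> inv g \<otimes> x \<in> S"
proof
  assume "x \<in> g <# S"
  then obtain s where "s \<in> S" "x = g \<otimes> s" by (auto simp: l_coset_def)
  then show "inv g \<otimes> x \<in> S" using assms by (simp add: m_assoc[symmetric] subsetD)
next
  assume "inv g \<otimes> x \<in> S"
  moreover have "x = g \<otimes> (inv g \<otimes> x)" using assms by (simp add: m_assoc[symmetric])
  ultimately show "x \<in> g <# S" unfolding l_coset_def by blast
qed

lemma topspace_PG: "topspace (PG G) = PiE (carrier G) (\<lambda>_. UNIV)"
  by (simp add: PG_def)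

lemma chi_in: "chi G Y \<in> topspace (PG G)"
  by (simp add: topspace_PG chi_def)

definition Nb :: "('a, 'b) monoid_scheme \<Rightarrow> ('a \<Rightarrow> bool) \<Rightarrow> 'a set \<Rightarrow> ('a \<Rightarrow> bool) set" where
  "Nb G y K = {z \<in> topspace (PG G). \<forall>k\<in>K. z k = y k}"

lemma Nb_open:
  assumes "finite K" "y \<in> topspace (PG G)" "K \<subseteq> carrier G"
  shows "openin (PG G) (Nb G y K)"
proof -
  have eq: "Nb G y K = PiE (carrier G) (\<lambda>i. if i \<in> K then {y i} else UNIV)"
  proof (intro Set.set_eqI iffI)
    fix z assume "z \<in> Nb G y K" then show "z \<in> PiE (carrier G) (\<lambda>i. if i \<in> K then {y i} else UNIV)"
      by (auto simp: Nb_def topspace_PG PiE_iff)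
  next
    fix z assume z: "z \<in> PiE (carrier G) (\<lambda>i. if i \<in> K then {y i} else UNIV)"
    have "z k = y k" if "k \<in> K" for k using z that assms(3) by (force simp: PiE_iff)
    then show "z \<in> Nb G y K" using z by (auto simp: Nb_def topspace_PG PiE_iff)
  qed
  have "finite {i \<in> carrier G. (if i \<in> K then {y i} else UNIV) \<noteq> topspace (discrete_topology (UNIV::bool set))}"
    by (rule finite_subset[OF _ assms(1)]) auto
  then show ?thesis unfolding eq PG_def by (subst openin_PiE_gen) auto
qed

lemma Nb_self: "y \<in> topspace (PG G) \<Longrightarrow> y \<in> Nb G y K"
  by (simp add: Nb_def)

lemma Nb_base:
  assumes "openin (PG G) V" "y \<in> V"
  shows "\<exists>K. finite K \<and> K \<subseteq> carrier G \<and> Nb G y K \<subseteq> V"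
proof -
  obtain XX where XX: "y \<in> (\<Pi>\<^sub>E i\<in>carrier G. XX i)" "\<forall>i. openin (discrete_topology (UNIV::bool set)) (XX i)"
    "finite {i. XX i \<noteq> topspace (discrete_topology (UNIV::bool set))}" "(\<Pi>\<^sub>E i\<in>carrier G. XX i) \<subseteq> V"
    using product_topology_open_contains_basis[OF assms[unfolded PG_def]] by blast
  define K where "K = {i \<in> carrier G. XX i \<noteq> UNIV}"
  have "finite K" using XX(3) unfolding K_def by (auto intro: finite_subset)
  moreover have "Nb G y K \<subseteq> V"
  proof
    fix z assume z: "z \<in> Nb G y K"
    have "z \<in> (\<Pi>\<^sub>E i\<in>carrier G. XX i)"
    proof -
      have "z i \<in> XX i" if "i \<in> carrier G" for i
      proof (cases "i \<in> K")
        case True then show ?thesis using z XX(1) that by (auto simp: Nb_def)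
      next
        case False then show ?thesis using that by (auto simp: K_def)
      qed
      moreover have "z \<in> extensional (carrier G)" using z by (auto simp: Nb_def topspace_PG PiE_iff)
      ultimately show ?thesis by (auto simp: PiE_iff)
    qed
    then show "z \<in> V" using XX(4) by blast
  qed
  ultimately show ?thesis by (auto simp: K_def)
qed

lemma chi_Nb:
  fixes G :: "('a, 'b) monoid_scheme"
  assumes "K \<subseteq> carrier G"
  shows "chi G Z \<in> Nb G (chi G Y) K \<longleftrightarrow> (\<forall>k\<in>K. k \<in> Z \<longleftrightarrow> k \<in> Y)"
proof -
  have "chi G Z \<in> topspace (PG G)" by (rule chi_in)
  then show ?thesis using assms by (auto simp: Nb_def chi_def subsetD)
qed

lemma chi_inj: "Z \<subseteq> carrier G \<Longrightarrow> Y \<subseteq> carrier G \<Longrightarrow> chi G Z = chi G Y \<Longrightarrow> Z = Y"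
  unfolding chi_def by (metis restrict_apply' subsetI subset_antisym subsetD)


section \<open>Ultrafilters\<close>

lemma uf_exists:
  assumes FP: "F \<subseteq> Pow (carrier G)"
    and inf: "\<And>S. finite S \<Longrightarrow> S \<subseteq> F \<Longrightarrow> infinite (carrier G \<inter> \<Inter>S)"
  shows "\<exists>p. free_ultrafilter_on G p \<and> F \<subseteq> p"
proof -
  let ?C = "carrier G"
  define F' where "F' = F \<union> {?C - E | E. finite E}"
  define fip where "fip Q \<longleftrightarrow> (\<forall>S. finite S \<and> S \<subseteq> Q \<longrightarrow> ?C \<inter> \<Inter>S \<noteq> {})" for Q :: "'a set set"
  have Cinf: "infinite ?C" using inf[of "{}"] by simp
  have fipF': "fip F'"
    unfolding fip_def
  proof (intro allI impI)
    fix S assume S: "finite S \<and> S \<subseteq> F'"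
    define S1 where "S1 = S \<inter> F"
    define S2 where "S2 = S - F"
    have cof: "Q \<subseteq> ?C \<and> finite (?C - Q)" if "Q \<in> S2" for Q
    proof -
      from that S obtain E where "finite E" "Q = ?C - E" by (auto simp: S2_def F'_def)
      then show ?thesis by (auto intro: finite_subset)
    qed
    have fin: "finite (\<Union>Q\<in>S2. ?C - Q)"
      apply (rule finite_UN_I) using S cof by (auto simp: S2_def)
    have i1: "infinite (?C \<inter> \<Inter>S1)" using inf[of S1] S by (auto simp: S1_def)
    have sub: "(?C \<inter> \<Inter>S1) - (\<Union>Q\<in>S2. ?C - Q) \<subseteq> ?C \<inter> \<Inter>S"
      by (auto simp: S1_def S2_def)
    have "infinite ((?C \<inter> \<Inter>S1) - (\<Union>Q\<in>S2. ?C - Q))" using i1 fin by (simp add: Diff_infinite_finite)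
    then have "infinite (?C \<inter> \<Inter>S)" using sub infinite_super by blast
    then show "?C \<inter> \<Inter>S \<noteq> {}" by (metis finite.emptyI)
  qed
  define AA where "AA = {Q. F' \<subseteq> Q \<and> Q \<subseteq> Pow ?C \<and> fip Q}"
  have F'P: "F' \<subseteq> Pow ?C" using FP by (auto simp: F'_def)
  have "\<exists>M\<in>AA. \<forall>Z\<in>AA. M \<subseteq> Z \<longrightarrow> Z = M"
  proof (rule subset_Zorn_nonempty)
    show "AA \<noteq> {}" using fipF' F'P by (auto simp: AA_def)
  next
    fix CC assume CC: "CC \<noteq> {}" "subset.chain AA CC"
    have "fip (\<Union>CC)"
      unfolding fip_def
    proof (intro allI impI)
      fix S assume S: "finite S \<and> S \<subseteq> \<Union>CC"
      show "?C \<inter> \<Inter>S \<noteq> {}"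
      proof (cases "S = {}")
        case True then show ?thesis using Cinf by auto
      next
        case False
        obtain B where "B \<in> CC" "S \<subseteq> B"
          using finite_subset_Union_chain[of S CC AA] S CC by blast
        then show ?thesis using CC(2) S by (auto simp: subset_chain_def AA_def fip_def)
      qed
    qed
    moreover have "F' \<subseteq> \<Union>CC" using CC by (force simp: subset_chain_def AA_def)
    ultimately show "\<Union>CC \<in> AA" using CC by (auto simp: subset_chain_def AA_def)
  qed
  then obtain M where M: "M \<in> AA" and Mmax: "\<And>Z. Z \<in> AA \<Longrightarrow> M \<subseteq> Z \<Longrightarrow> Z = M" by blast
  have MP: "M \<subseteq> Pow ?C" and MF: "F' \<subseteq> M" and Mfip: "fip M" using M by (auto simp: AA_def)
  have key: "P \<in> M" if P: "P \<subseteq> ?C" and h: "\<And>S. finite S \<Longrightarrow> S \<subseteq> M \<Longrightarrow> ?C \<inter> \<Inter>S \<inter> P \<noteq> {}" for P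
  proof -
    have "fip (insert P M)"
      unfolding fip_def
    proof (intro allI impI)
      fix S assume S: "finite S \<and> S \<subseteq> insert P M"
      show "?C \<inter> \<Inter>S \<noteq> {}"
      proof (cases "P \<in> S")
        case True
        have "?C \<inter> \<Inter>S = ?C \<inter> \<Inter>(S - {P}) \<inter> P" using True by auto
        then show ?thesis using h[of "S - {P}"] S by auto
      next
        case False
        then have "S \<subseteq> M" using S by auto
        then show ?thesis using Mfip S by (auto simp: fip_def)
      qed
    qed
    then have "insert P M \<in> AA" using M P by (auto simp: AA_def)
    then show ?thesis using Mmax by blast
  qed
  have ne: "?C \<inter> \<Inter>S \<noteq> {}" if "finite S" "S \<subseteq> M" for S using Mfip that by (auto simp: fip_def)
  have uf: "ultrafilter_on G M"
    unfolding ultrafilter_on_def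
  proof (intro conjI ballI allI impI)
    show "M \<subseteq> Pow ?C" by (rule MP)
    show "?C \<in> M" by (rule key) (use ne in auto)
    show "{} \<notin> M"
    proof
      assume "{} \<in> M" then show False using ne[of "{{}}"] by auto
    qed
  next
    fix P Q assume "P \<in> M" "Q \<in> M"
    then show "P \<inter> Q \<in> M"
    proof (intro key)
      show "P \<inter> Q \<subseteq> ?C" using \<open>P \<in> M\<close> MP by auto
      fix S assume "finite S" "S \<subseteq> M"
      then have "?C \<inter> \<Inter>(insert P (insert Q S)) \<noteq> {}" using \<open>P \<in> M\<close> \<open>Q \<in> M\<close> by (intro ne) auto
      then show "?C \<inter> \<Inter>S \<inter> (P \<inter> Q) \<noteq> {}" by auto
    qed
  next
    fix P Q assume "P \<in> M" "P \<subseteq> Q \<and> Q \<subseteq> ?C"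
    then show "Q \<in> M"
    proof (intro key)
      show "Q \<subseteq> ?C" using \<open>P \<subseteq> Q \<and> Q \<subseteq> ?C\<close> by auto
      fix S assume "finite S" "S \<subseteq> M"
      then have "?C \<inter> \<Inter>(insert P S) \<noteq> {}" using \<open>P \<in> M\<close> by (intro ne) auto
      then show "?C \<inter> \<Inter>S \<inter> Q \<noteq> {}" using \<open>P \<subseteq> Q \<and> Q \<subseteq> ?C\<close> by auto
    qed
  next
    fix P assume P: "P \<subseteq> ?C"
    show "P \<in> M \<or> ?C - P \<in> M"
    proof (rule ccontr)
      assume "\<not> (P \<in> M \<or> ?C - P \<in> M)"
      then have n1: "P \<notin> M" and n2: "?C - P \<notin> M" by auto
      obtain S1 where S1: "finite S1" "S1 \<subseteq> M" "?C \<inter> \<Inter>S1 \<inter> P = {}"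
        using key[OF P] n1 by blast
      obtain S2 where S2: "finite S2" "S2 \<subseteq> M" "?C \<inter> \<Inter>S2 \<inter> (?C - P) = {}"
        using key[of "?C - P"] n2 by blast
      have "?C \<inter> \<Inter>(S1 \<union> S2) = {}" using S1(3) S2(3) by blast
      then show False using ne[of "S1 \<union> S2"] S1 S2 by auto
    qed
  qed
  have "free_ultrafilter_on G M"
    unfolding free_ultrafilter_on_def
  proof (intro conjI uf ballI)
    fix P assume P: "P \<in> M"
    show "infinite P"
    proof
      assume "finite P"
      then have "?C - P \<in> M" using MF by (auto simp: F'_def)
      then show False using ne[of "{P, ?C - P}"] P by auto
    qed
  qed
  then show ?thesis using MF by (auto simp: F'_def)
qed

lemma uf_props:
  assumes "ultrafilter_on G p"
  shows uf_sub: "P \<in> p \<Longrightarrow> P \<subseteq> carrier G"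
    and uf_int: "P \<in> p \<Longrightarrow> Q \<in> p \<Longrightarrow> P \<inter> Q \<in> p"
    and uf_mono: "P \<in> p \<Longrightarrow> P \<subseteq> Q \<Longrightarrow> Q \<subseteq> carrier G \<Longrightarrow> Q \<in> p"
    and uf_compl: "P \<subseteq> carrier G \<Longrightarrow> P \<notin> p \<Longrightarrow> carrier G - P \<in> p"
    and uf_ne: "P \<in> p \<Longrightarrow> P \<noteq> {}"
    and uf_C: "carrier G \<in> p"
proof -
  have u: "p \<subseteq> Pow (carrier G)" "carrier G \<in> p" "{} \<notin> p"
     "\<And>P Q. P\<in>p \<Longrightarrow> Q\<in>p \<Longrightarrow> P \<inter> Q \<in> p"
     "\<And>P Q. P\<in>p \<Longrightarrow> P \<subseteq> Q \<Longrightarrow> Q \<subseteq> carrier G \<Longrightarrow> Q \<in> p"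
     "\<And>P. P \<subseteq> carrier G \<Longrightarrow> P \<in> p \<or> carrier G - P \<in> p"
    using assms unfolding ultrafilter_on_def by blast+
  show "P \<in> p \<Longrightarrow> P \<subseteq> carrier G" using u(1) by blast
  show "P \<in> p \<Longrightarrow> Q \<in> p \<Longrightarrow> P \<inter> Q \<in> p" by (rule u(4))
  show "P \<in> p \<Longrightarrow> P \<subseteq> Q \<Longrightarrow> Q \<subseteq> carrier G \<Longrightarrow> Q \<in> p" by (rule u(5))
  show "P \<subseteq> carrier G \<Longrightarrow> P \<notin> p \<Longrightarrow> carrier G - P \<in> p" using u(6) by blast
  show "P \<in> p \<Longrightarrow> P \<noteq> {}" using u(3) by blast
  show "carrier G \<in> p" by (rule u(2))
qed

lemma uf_Inter:
  assumes "ultrafilter_on G p" "finite K" "\<And>k. k \<in> K \<Longrightarrow> E k \<in> p"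
  shows "carrier G \<inter> (\<Inter>k\<in>K. E k) \<in> p"
  using assms(2,3)
proof (induction K rule: finite_induct)
  case empty then show ?case using uf_C[OF assms(1)] by simp
next
  case (insert x K)
  have "carrier G \<inter> (\<Inter>k\<in>insert x K. E k) = (carrier G \<inter> (\<Inter>k\<in>K. E k)) \<inter> E x" by auto
  then show ?case using insert uf_int[OF assms(1)] by auto
qed

lemma uf_lim:
  fixes \<phi> :: "'a \<Rightarrow> 'a set"
  assumes uf: "ultrafilter_on G p" and K: "finite K" "K \<subseteq> carrier G"
  defines "Y \<equiv> {x \<in> carrier G. {g \<in> carrier G. x \<in> \<phi> g} \<in> p}"
  shows "{g \<in> carrier G. \<forall>k\<in>K. (k \<in> \<phi> g \<longleftrightarrow> k \<in> Y)} \<in> p"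
proof -
  define E where "E k = {g \<in> carrier G. (k \<in> \<phi> g \<longleftrightarrow> k \<in> Y)}" for k
  have "E k \<in> p" if "k \<in> K" for k
  proof (cases "k \<in> Y")
    case True
    then have "E k = {g \<in> carrier G. k \<in> \<phi> g}" by (auto simp: E_def)
    then show ?thesis using True Y_def by simp
  next
    case False
    then have "E k = carrier G - {g \<in> carrier G. k \<in> \<phi> g}" by (auto simp: E_def)
    moreover have "{g \<in> carrier G. k \<in> \<phi> g} \<notin> p" using False that K by (auto simp: Y_def)
    ultimately show ?thesis using uf_compl[OF uf] by auto
  qed
  then have "carrier G \<inter> (\<Inter>k\<in>K. E k) \<in> p" by (intro uf_Inter[OF uf K(1)])
  moreover have "carrier G \<inter> (\<Inter>k\<in>K. E k) = {g \<in> carrier G. \<forall>k\<in>K. (k \<in> \<phi> g \<longleftrightarrow> k \<in> Y)}"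
    by (auto simp: E_def)
  ultimately show ?thesis by simp
qed


lemma W_iff:
  "Y \<in> Wset G A \<longleftrightarrow> Y \<subseteq> carrier G \<and>
     (\<forall>K. finite K \<and> K \<subseteq> carrier G \<longrightarrow> infinite {g \<in> carrier G. \<forall>k\<in>K. (k \<in> A #>\<^bsub>G\<^esub> g \<longleftrightarrow> k \<in> Y)})"
  (is "?L \<longleftrightarrow> ?R")
proof
  assume L: ?L
  then have Y: "Y \<subseteq> carrier G" by (auto simp: Wset_def Torb_def)
  show ?R
  proof (intro conjI allI impI Y)
    fix K assume K: "finite K \<and> K \<subseteq> carrier G"
    have all: "\<forall>U. (\<exists>V. openin (PG G) V \<and> chi G Y \<in> V \<and> V \<subseteq> U) \<longrightarrow> infinite (hits G U A)"
      using L by (simp add: Wset_def)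
    have "openin (PG G) (Nb G (chi G Y) K)" using K by (intro Nb_open chi_in) auto
    moreover have "chi G Y \<in> Nb G (chi G Y) K" by (intro Nb_self chi_in)
    ultimately have "infinite (hits G (Nb G (chi G Y) K) A)"
      using all[rule_format, of "Nb G (chi G Y) K"] by blast
    moreover have "hits G (Nb G (chi G Y) K) A = {g \<in> carrier G. \<forall>k\<in>K. (k \<in> A #>\<^bsub>G\<^esub> g \<longleftrightarrow> k \<in> Y)}"
      using K by (auto simp: hits_def chi_Nb)
    ultimately show "infinite {g \<in> carrier G. \<forall>k\<in>K. (k \<in> A #>\<^bsub>G\<^esub> g \<longleftrightarrow> k \<in> Y)}" by simp
  qed
next
  assume R: ?R
  have Ysub: "Y \<subseteq> carrier G" using R by (rule conjunct1)
  have Rinf: "infinite {g \<in> carrier G. \<forall>k\<in>K. (k \<in> A #>\<^bsub>G\<^esub> g \<longleftrightarrow> k \<in> Y)}"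
    if "finite K" "K \<subseteq> carrier G" for K
    using R that by simp
  have hs: "{g \<in> carrier G. \<forall>k\<in>K. (k \<in> A #>\<^bsub>G\<^esub> g \<longleftrightarrow> k \<in> Y)} \<subseteq> hits G V A"
    if K: "K \<subseteq> carrier G" and NV: "Nb G (chi G Y) K \<subseteq> V" for K V
  proof
    fix g assume g: "g \<in> {g \<in> carrier G. \<forall>k\<in>K. (k \<in> A #>\<^bsub>G\<^esub> g \<longleftrightarrow> k \<in> Y)}"
    then have "chi G (A #>\<^bsub>G\<^esub> g) \<in> Nb G (chi G Y) K" using chi_Nb[OF K] by blast
    then show "g \<in> hits G V A" using g NV unfolding hits_def by blast
  qed
  have T: "Y \<in> Torb G A"
    unfolding Torb_def
  proof (intro CollectI conjI Ysub)
    show "chi G Y \<in> PG G closure_of (chi G ` {A #>\<^bsub>G\<^esub> g |g. g \<in> carrier G})"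
      unfolding in_closure_of
    proof (intro conjI chi_in allI impI)
      fix T assume T: "chi G Y \<in> T \<and> openin (PG G) T"
      then obtain K where K: "finite K" "K \<subseteq> carrier G" "Nb G (chi G Y) K \<subseteq> T"
        using Nb_base[OF conjunct2[OF T] conjunct1[OF T]] by blast
      have "infinite {g \<in> carrier G. \<forall>k\<in>K. (k \<in> A #>\<^bsub>G\<^esub> g \<longleftrightarrow> k \<in> Y)}" using Rinf K(1,2) .
      then have "{g \<in> carrier G. \<forall>k\<in>K. (k \<in> A #>\<^bsub>G\<^esub> g \<longleftrightarrow> k \<in> Y)} \<noteq> {}"
        by (rule infinite_imp_nonempty)
      then obtain g where g: "g \<in> carrier G" "\<forall>k\<in>K. (k \<in> A #>\<^bsub>G\<^esub> g \<longleftrightarrow> k \<in> Y)"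
        by blast
      then have "chi G (A #>\<^bsub>G\<^esub> g) \<in> T" using chi_Nb[OF K(2)] K(3) by blast
      moreover have "chi G (A #>\<^bsub>G\<^esub> g) \<in> chi G ` {A #>\<^bsub>G\<^esub> g |g. g \<in> carrier G}"
        using g(1) by blast
      ultimately show "\<exists>y. y \<in> chi G ` {A #>\<^bsub>G\<^esub> g |g. g \<in> carrier G} \<and> y \<in> T" by blast
    qed
  qed
  show ?L
    unfolding Wset_def
  proof (intro CollectI conjI T allI impI)
    fix U assume "\<exists>V. openin (PG G) V \<and> chi G Y \<in> V \<and> V \<subseteq> U"
    then obtain V where V: "openin (PG G) V" "chi G Y \<in> V" "V \<subseteq> U" by blast
    obtain K where K: "finite K" "K \<subseteq> carrier G" "Nb G (chi G Y) K \<subseteq> V" using Nb_base[OF V(1,2)] by blast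
    have "infinite {g \<in> carrier G. \<forall>k\<in>K. (k \<in> A #>\<^bsub>G\<^esub> g \<longleftrightarrow> k \<in> Y)}" using Rinf K(1,2) .
    moreover have "{g \<in> carrier G. \<forall>k\<in>K. (k \<in> A #>\<^bsub>G\<^esub> g \<longleftrightarrow> k \<in> Y)} \<subseteq> hits G U A"
      using hs[OF K(2), of U] K(3) V(3) by blast
    ultimately show "infinite (hits G U A)" using infinite_super by blast
  qed
qed

lemma W_fin:
  assumes "Y \<in> Wset G A" "finite F" "F \<subseteq> Y"
  shows "infinite {g \<in> carrier G. F \<subseteq> A #>\<^bsub>G\<^esub> g}"
proof -
  have "infinite {g \<in> carrier G. \<forall>k\<in>F. (k \<in> A #>\<^bsub>G\<^esub> g \<longleftrightarrow> k \<in> Y)}"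
    using assms W_iff[of Y G A] by blast
  moreover have "{g \<in> carrier G. \<forall>k\<in>F. (k \<in> A #>\<^bsub>G\<^esub> g \<longleftrightarrow> k \<in> Y)} \<subseteq> {g \<in> carrier G. F \<subseteq> A #>\<^bsub>G\<^esub> g}"
    using assms(3) by auto
  ultimately show ?thesis using infinite_super by blast
qed

lemma W_ex:
  assumes "free_ultrafilter_on G p"
  shows "{x \<in> carrier G. {g \<in> carrier G. x \<in> A #>\<^bsub>G\<^esub> g} \<in> p} \<in> Wset G A"
  unfolding W_iff
proof (intro conjI allI impI)
  have uf: "ultrafilter_on G p" using assms by (simp add: free_ultrafilter_on_def)
  fix K assume K: "finite K \<and> K \<subseteq> carrier G"
  show "infinite {g \<in> carrier G. \<forall>k\<in>K. (k \<in> A #>\<^bsub>G\<^esub> g) = (k \<in> {x \<in> carrier G. {g \<in> carrier G. x \<in> A #>\<^bsub>G\<^esub> g} \<in> p})}"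
  proof -
    have "{g \<in> carrier G. \<forall>k\<in>K. (k \<in> A #>\<^bsub>G\<^esub> g) = (k \<in> {x \<in> carrier G. {g \<in> carrier G. x \<in> A #>\<^bsub>G\<^esub> g} \<in> p})} \<in> p"
      using uf_lim[OF uf, of K "\<lambda>g. A #>\<^bsub>G\<^esub> g"] K by simp
    moreover have "\<forall>P\<in>p. infinite P" using assms by (simp add: free_ultrafilter_on_def)
    ultimately show ?thesis by blast
  qed
qed auto



lemma (in group) inv_inj: "inj_on (m_inv G) (carrier G)"
  by (rule inj_onI) (metis inv_inv)

lemma (in group) inf_inv_image:
  assumes "B \<subseteq> carrier G" "infinite B" shows "infinite (m_inv G ` B)"
proof
  assume "finite (m_inv G ` B)"
  then have "finite B" by (rule finite_imageD[OF _ inj_on_subset[OF inv_inj assms(1)]])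
  then show False using assms(2) by simp
qed

lemma (in group) inv_mem_iff:
  assumes "A \<subseteq> carrier G" "f \<in> carrier G" "g \<in> carrier G"
  shows "inv f \<in> A #> g \<longleftrightarrow> inv g \<in> f <# A"
  using assms by (simp add: rcos_mem_iff lcos_mem_iff)

lemma (in group) part1:
  assumes Cinf: "infinite (carrier G)" and A: "A \<subseteq> carrier G"
  shows "n_thin G n A \<longleftrightarrow> (\<forall>Y\<in>Wset G A. finite Y \<and> card Y \<le> n)"
proof
  assume thin: "n_thin G n A"
  show "\<forall>Y\<in>Wset G A. finite Y \<and> card Y \<le> n"
  proof (intro ballI, rule ccontr)
    fix Y assume Y: "Y \<in> Wset G A" and nY: "\<not> (finite Y \<and> card Y \<le> n)"
    obtain F where F: "F \<subseteq> Y" "finite F" "card F = Suc n"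
    proof (cases "finite Y")
      case True
      then have "Suc n \<le> card Y" using nY by auto
      then obtain T where "T \<subseteq> Y" "card T = Suc n" "finite T" by (rule obtain_subset_with_card_n)
      then show ?thesis using that by blast
    next
      case False
      then show ?thesis using infinite_arbitrarily_large[of Y "Suc n"] that by blast
    qed
    have YC: "Y \<subseteq> carrier G" using conjunct1[OF W_iff[THEN iffD1, OF Y]] .
    have FC: "F \<subseteq> carrier G" using F YC by blast
    define D where "D = {g \<in> carrier G. F \<subseteq> A #> g}"
    have Dinf: "infinite D" unfolding D_def by (rule W_fin[OF Y F(2) F(1)])
    have F'C: "m_inv G ` F \<subseteq> carrier G" using FC by auto
    have "card (m_inv G ` F) = card F" by (rule card_image[OF inj_on_subset[OF inv_inj FC]])
    then have cF': "card (m_inv G ` F) = Suc n" using F(3) by simp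
    have "finite (\<Inter>f\<in>m_inv G ` F. f <# A)" using thin F'C cF' unfolding n_thin_def by blast
    moreover have "m_inv G ` D \<subseteq> (\<Inter>f\<in>m_inv G ` F. f <# A)"
    proof
      fix h assume "h \<in> m_inv G ` D"
      then obtain g where g: "g \<in> D" "h = inv g" by blast
      show "h \<in> (\<Inter>f\<in>m_inv G ` F. f <# A)"
      proof
        fix f assume "f \<in> m_inv G ` F"
        then obtain x where x: "x \<in> F" "f = inv x" by blast
        have xC: "x \<in> carrier G" using x FC by auto
        have gC: "g \<in> carrier G" using g unfolding D_def by auto
        have "x \<in> A #> g" using x g unfolding D_def by auto
        then have "inv f \<in> A #> g" using x xC by simp
        then show "h \<in> f <# A" using inv_mem_iff[OF A _ gC, of f] x xC g by simp
      qed
    qed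
    ultimately have "finite (m_inv G ` D)" by (rule finite_subset[rotated])
    moreover have "inj_on (m_inv G) D" by (rule inj_on_subset[OF inv_inj]) (auto simp: D_def)
    ultimately have "finite D" by (rule finite_imageD)
    then show False using Dinf by blast
  qed
next
  assume W: "\<forall>Y\<in>Wset G A. finite Y \<and> card Y \<le> n"
  show "n_thin G n A"
    unfolding n_thin_def
  proof (intro allI impI, rule ccontr)
    fix F assume F: "F \<subseteq> carrier G \<and> card F = Suc n" and inf: "infinite (\<Inter>g\<in>F. g <# A)"
    define I where "I = (\<Inter>g\<in>F. g <# A)"
    have Ffin: "finite F" using F card.infinite by fastforce
    have "F \<noteq> {}" using F by auto
    then obtain f0 where f0: "f0 \<in> F" by blast
    have IC: "I \<subseteq> carrier G" using l_coset_subset_G[OF A, of f0] f0 F unfolding I_def by blast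
    define D where "D = m_inv G ` I"
    have DC: "D \<subseteq> carrier G" using IC unfolding D_def by auto
    have Dinf: "infinite D"
    proof
      assume "finite D"
      then have "finite I" unfolding D_def by (rule finite_imageD[OF _ inj_on_subset[OF inv_inj IC]])
      then show False using inf unfolding I_def by blast
    qed
    have "\<exists>p. free_ultrafilter_on G p \<and> {D} \<subseteq> p"
    proof (rule uf_exists)
      show "{D} \<subseteq> Pow (carrier G)" using DC by auto
      fix S assume "finite S" "S \<subseteq> {D}"
      then have "S = {} \<or> S = {D}" by blast
      then show "infinite (carrier G \<inter> \<Inter>S)"
      proof
        assume "S = {}" then show ?thesis using Cinf by simp
      next
        assume "S = {D}" then have "carrier G \<inter> \<Inter>S = D" using DC by auto
        then show ?thesis using Dinf by simp
      qed
    qed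
    then obtain p where p: "free_ultrafilter_on G p" "D \<in> p" by blast
    have uf: "ultrafilter_on G p" using p(1) by (simp add: free_ultrafilter_on_def)
    define Y where "Y = {x \<in> carrier G. {g \<in> carrier G. x \<in> A #> g} \<in> p}"
    have Y: "Y \<in> Wset G A" unfolding Y_def by (rule W_ex[OF p(1)])
    have sub: "m_inv G ` F \<subseteq> Y"
    proof
      fix y assume "y \<in> m_inv G ` F"
      then obtain x where x: "x \<in> F" "y = inv x" by blast
      have xC: "x \<in> carrier G" using x F by auto
      have "D \<subseteq> {g \<in> carrier G. inv x \<in> A #> g}"
      proof
        fix g assume "g \<in> D"
        then obtain h where h: "h \<in> I" "g = inv h" unfolding D_def by blast
        have hC: "h \<in> carrier G" using h IC by auto
        have "h \<in> x <# A" using h x unfolding I_def by blast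
        then have "inv x \<in> A #> inv h" using inv_mem_iff[OF A xC, of "inv h"] hC by simp
        then show "g \<in> {g \<in> carrier G. inv x \<in> A #> g}" using h hC by auto
      qed
      then have "{g \<in> carrier G. inv x \<in> A #> g} \<in> p" using uf_mono[OF uf p(2)] by blast
      then show "y \<in> Y" using x xC unfolding Y_def by auto
    qed
    have "finite Y" "card Y \<le> n" using W Y by auto
    moreover have "card (m_inv G ` F) = Suc n"
    proof -
      have "card (m_inv G ` F) = card F" using F by (intro card_image inj_on_subset[OF inv_inj]) auto
      then show ?thesis using F by simp
    qed
    ultimately show False using card_mono[OF _ sub] by auto
  qed
qed

lemma (in group) part2:
  assumes Cinf: "infinite (carrier G)" and A: "A \<subseteq> carrier G"
  shows "sparse G A \<longleftrightarrow> (\<forall>Y\<in>Wset G A. finite Y)"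
proof
  assume sp: "sparse G A"
  show "\<forall>Y\<in>Wset G A. finite Y"
  proof (intro ballI, rule ccontr)
    fix Y assume Y: "Y \<in> Wset G A" and nY: "infinite Y"
    have YC: "Y \<subseteq> carrier G" using conjunct1[OF W_iff[THEN iffD1, OF Y]] .
    have "infinite (m_inv G ` Y)" by (rule inf_inv_image[OF YC nY])
    moreover have "m_inv G ` Y \<subseteq> carrier G" using YC by auto
    ultimately obtain F where F: "F \<subseteq> m_inv G ` Y" "finite F" "finite (carrier G \<inter> (\<Inter>g\<in>F. g <# A))"
      using sp unfolding sparse_def by blast
    have FC: "F \<subseteq> carrier G" using F YC by auto
    have F0: "m_inv G ` F \<subseteq> Y" using F(1) YC by (auto simp: subset_iff)
    define D where "D = {g \<in> carrier G. m_inv G ` F \<subseteq> A #> g}"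
    have Dinf: "infinite D" unfolding D_def by (rule W_fin[OF Y _ F0]) (use F in auto)
    have "m_inv G ` D \<subseteq> carrier G \<inter> (\<Inter>g\<in>F. g <# A)"
    proof
      fix h assume "h \<in> m_inv G ` D"
      then obtain g where g: "g \<in> D" "h = inv g" by blast
      have gC: "g \<in> carrier G" using g unfolding D_def by auto
      have "h \<in> f <# A" if f: "f \<in> F" for f
      proof -
        have "inv f \<in> A #> g" using f g unfolding D_def by auto
        then show ?thesis using inv_mem_iff[OF A, of f g] f FC gC g by auto
      qed
      then show "h \<in> carrier G \<inter> (\<Inter>g\<in>F. g <# A)" using gC g by auto
    qed
    then have "finite (m_inv G ` D)" using F(3) by (rule finite_subset)
    moreover have "inj_on (m_inv G) D" by (rule inj_on_subset[OF inv_inj]) (auto simp: D_def)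
    ultimately have "finite D" by (rule finite_imageD)
    then show False using Dinf by blast
  qed
next
  assume W: "\<forall>Y\<in>Wset G A. finite Y"
  show "sparse G A"
    unfolding sparse_def
  proof (intro allI impI, rule ccontr)
    fix S assume S: "S \<subseteq> carrier G \<and> infinite S"
      and nsp: "\<nexists>F. F \<subseteq> S \<and> finite F \<and> finite (carrier G \<inter> (\<Inter>g\<in>F. g <# A))"
    define Dk where "Dk f = {g \<in> carrier G. inv g \<in> f <# A}" for f
    have "\<exists>p. free_ultrafilter_on G p \<and> Dk ` S \<subseteq> p"
    proof (rule uf_exists)
      show "Dk ` S \<subseteq> Pow (carrier G)" by (auto simp: Dk_def)
      fix SS assume SS: "finite SS" "SS \<subseteq> Dk ` S"
      then obtain F where F: "F \<subseteq> S" "finite F" "SS = Dk ` F"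
        by (meson finite_subset_image)
      have infI: "infinite (carrier G \<inter> (\<Inter>g\<in>F. g <# A))" using nsp F by blast
      have "m_inv G ` (carrier G \<inter> (\<Inter>g\<in>F. g <# A)) \<subseteq> carrier G \<inter> \<Inter>SS"
        using F(3) by (auto simp: Dk_def)
      moreover have "infinite (m_inv G ` (carrier G \<inter> (\<Inter>g\<in>F. g <# A)))"
        by (rule inf_inv_image[OF _ infI]) auto
      ultimately show "infinite (carrier G \<inter> \<Inter>SS)" using infinite_super by blast
    qed
    then obtain p where p: "free_ultrafilter_on G p" "Dk ` S \<subseteq> p" by blast
    have uf: "ultrafilter_on G p" using p(1) by (simp add: free_ultrafilter_on_def)
    define Y where "Y = {x \<in> carrier G. {g \<in> carrier G. x \<in> A #> g} \<in> p}"
    have Y: "Y \<in> Wset G A" unfolding Y_def by (rule W_ex[OF p(1)])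
    have sub: "m_inv G ` S \<subseteq> Y"
    proof
      fix y assume "y \<in> m_inv G ` S"
      then obtain x where x: "x \<in> S" "y = inv x" by blast
      have xC: "x \<in> carrier G" using x S by auto
      have "Dk x \<subseteq> {g \<in> carrier G. inv x \<in> A #> g}"
        using inv_mem_iff[OF A xC] by (auto simp: Dk_def)
      moreover have "Dk x \<in> p" using p(2) x by auto
      ultimately have "{g \<in> carrier G. inv x \<in> A #> g} \<in> p" using uf_mono[OF uf] by blast
      then show "y \<in> Y" using x xC unfolding Y_def by auto
    qed
    have "infinite (m_inv G ` S)" using S by (intro inf_inv_image) auto
    then have "infinite Y" using sub infinite_super by blast
    then show False using W Y by blast
  qed
qed



lemma (in group) uf_stab:
  assumes uf: "ultrafilter_on G p" and g: "g \<in> carrier G" "g \<noteq> \<one>"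
    and fx: "uf_lmult G g p = p"
  shows False
proof -
  have shiftp: "g <# P \<in> p" if "P \<in> p" for P
  proof -
    have "g <# P \<in> uf_lmult G g p" using that unfolding uf_lmult_def by blast
    then show ?thesis using fx by simp
  qed
  have nodisj: "P \<inter> (g <# P) \<noteq> {}" if "P \<in> p" for P
    using uf_ne[OF uf uf_int[OF uf that shiftp[OF that]]] .
  have lc: "\<exists>x\<in>P. y = g \<otimes> x" if "y \<in> g <# P" for y P
    using that unfolding l_coset_def by blast
  have pc: "g [^] (a::int) \<otimes> (g [^] (b::int) \<otimes> x) = g [^] (a + b) \<otimes> x" if "x \<in> carrier G" for a b x
    using that g by (simp add: int_pow_mult m_assoc)
  define orb where "orb x = {g [^] (k::int) \<otimes> x | k. True}" for x
  define r where "r x = (SOME t. t \<in> orb x)" for x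
  have orb_self: "x \<in> orb x" if "x \<in> carrier G" for x
  proof -
    have "x = g [^] (0::int) \<otimes> x" using that by simp
    then show ?thesis unfolding orb_def by blast
  qed
  have orb_eq: "orb y = orb x" if x: "x \<in> carrier G" and y: "y \<in> orb x" for x y
  proof -
    obtain k where k: "y = g [^] (k::int) \<otimes> x" using y unfolding orb_def by blast
    show ?thesis
    proof (intro Set.set_eqI iffI)
      fix z assume "z \<in> orb y"
      then obtain j where j: "z = g [^] (j::int) \<otimes> y" unfolding orb_def by blast
      have "z = g [^] (j + k) \<otimes> x" using j k x g by (simp add: int_pow_mult m_assoc)
      then show "z \<in> orb x" unfolding orb_def by blast
    next
      fix z assume "z \<in> orb x"
      then obtain j where j: "z = g [^] (j::int) \<otimes> x" unfolding orb_def by blast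
      have "g [^] (j - k) \<otimes> y = g [^] (j - k + k) \<otimes> x" using k pc[OF x] by simp
      then have "z = g [^] (j - k) \<otimes> y" using j by simp
      then show "z \<in> orb y" unfolding orb_def by blast
    qed
  qed
  have orbC: "orb x \<subseteq> carrier G" if "x \<in> carrier G" for x
    using that g unfolding orb_def by auto
  have r_in: "r x \<in> orb x" if "x \<in> carrier G" for x
    unfolding r_def using orb_self[OF that] by (rule someI)
  have r_eq: "r y = r x" if "x \<in> carrier G" "y \<in> orb x" for x y
  proof -
    have "orb y = orb x" by (rule orb_eq[OF that])
    then show ?thesis unfolding r_def by (simp only:)
  qed
  define T where "T = r ` carrier G"
  have T_C: "t \<in> carrier G" if "t \<in> T" for t
  proof -
    from that obtain x where x: "x \<in> carrier G" "t = r x" unfolding T_def by (rule imageE) simp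
    have "r x \<in> carrier G" using orbC[OF x(1)] r_in[OF x(1)] by (rule subsetD)
    then show ?thesis using x(2) by simp
  qed
  have r_T: "r t = t" if "t \<in> T" for t
  proof -
    from that obtain x where x: "x \<in> carrier G" "t = r x" unfolding T_def by (rule imageE) simp
    show ?thesis using r_eq[OF x(1) r_in[OF x(1)]] x(2) by simp
  qed
  define Q where "Q k = {g [^] (k::int) \<otimes> t | t. t \<in> T}" for k
  have QC: "Q k \<subseteq> carrier G" for k using T_C g unfolding Q_def by auto
  have cover: "\<exists>k. x \<in> Q k" if x: "x \<in> carrier G" for x
  proof -
    obtain j where j: "r x = g [^] (j::int) \<otimes> x" using r_in[OF x] unfolding orb_def by blast
    have "g [^] (- j) \<otimes> r x = g [^] (- j + j) \<otimes> x" using j pc[OF x] by simp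
    then have "x = g [^] (- j) \<otimes> r x" using x by simp
    moreover have "r x \<in> T" using x unfolding T_def by blast
    ultimately show ?thesis unfolding Q_def by blast
  qed
  have disj: "g [^] (a - b) = \<one>" if xab: "x \<in> Q a" "x \<in> Q b" for x a b
  proof -
    obtain t where t: "t \<in> T" "x = g [^] a \<otimes> t" using xab(1) unfolding Q_def by blast
    obtain t' where t': "t' \<in> T" "x = g [^] b \<otimes> t'" using xab(2) unfolding Q_def by blast
    have tC: "t \<in> carrier G" "t' \<in> carrier G" using t t' T_C by auto
    have "g [^] (a - b) \<otimes> t = g [^] (- b) \<otimes> (g [^] a \<otimes> t)"
      using pc[OF tC(1), of "- b" a] by simp
    also have "\<dots> = g [^] (- b) \<otimes> (g [^] b \<otimes> t')" using t t' by simp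
    also have "\<dots> = g [^] (- b + b) \<otimes> t'" using pc[OF tC(2)] by simp
    also have "\<dots> = t'" using tC by simp
    finally have eq: "g [^] (a - b) \<otimes> t = t'" .
    then have "t' \<in> orb t" unfolding orb_def by blast
    then have "r t' = r t" using r_eq tC by blast
    then have "t' = t" using r_T t t' by simp
    then show ?thesis using eq tC g by simp
  qed
  have shift: "g \<otimes> x \<in> Q (k + 1)" if xk: "x \<in> Q k" for x k
  proof -
    obtain t where t: "t \<in> T" "x = g [^] k \<otimes> t" using xk unfolding Q_def by blast
    have tC: "t \<in> carrier G" using t T_C by auto
    have "g \<otimes> x = g [^] (1 + k) \<otimes> t" using t tC g by (simp add: int_pow_mult m_assoc)
    then show ?thesis using t unfolding Q_def by (auto simp: add.commute)
  qed
  show False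
  proof (cases "\<exists>n::nat. n > 0 \<and> g [^] n = \<one>")
    case True
    then obtain n :: nat where n: "n > 0" "g [^] n = \<one>" by blast
    have cov2: "\<exists>k<n. x \<in> Q (int k)" if x: "x \<in> carrier G" for x
    proof -
      obtain j where j: "x \<in> Q j" using cover[OF x] by blast
      define m where "m = j mod int n"
      have m0: "0 \<le> m" "m < int n" using n unfolding m_def by auto
      have "g [^] j = g [^] (int n * (j div int n) + m)" unfolding m_def by simp
      also have "\<dots> = (g [^] (int n)) [^] (j div int n) \<otimes> g [^] m"
        using g by (simp add: int_pow_mult int_pow_pow)
      also have "\<dots> = g [^] m" using n g by (simp add: int_pow_int)
      finally have "g [^] j = g [^] m" .
      then have "x \<in> Q m" using j unfolding Q_def by simp
      moreover have "m = int (nat m)" using m0 by simp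
      ultimately show ?thesis using m0 by (intro exI[of _ "nat m"]) auto
    qed
    have "\<exists>k<n. Q (int k) \<in> p"
    proof (rule ccontr)
      assume "\<not> (\<exists>k<n. Q (int k) \<in> p)"
      then have "carrier G - Q (int k) \<in> p" if "k \<in> {..<n}" for k
        using that uf_compl[OF uf QC] by auto
      then have "carrier G \<inter> (\<Inter>k\<in>{..<n}. carrier G - Q (int k)) \<in> p"
        by (intro uf_Inter[OF uf]) auto
      moreover have "carrier G \<inter> (\<Inter>k\<in>{..<n}. carrier G - Q (int k)) = {}"
        using cov2 by blast
      ultimately show False using uf_ne[OF uf] by auto
    qed
    then obtain k where k: "Q (int k) \<in> p" by blast
    obtain y where y: "y \<in> Q (int k)" "y \<in> g <# Q (int k)" using nodisj[OF k] by blast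
    obtain x where x: "x \<in> Q (int k)" "y = g \<otimes> x" using lc[OF y(2)] by blast
    have "y \<in> Q (int k + 1)" using shift[OF x(1)] x(2) by simp
    then have "g [^] (int k + 1 - int k) = \<one>" using disj y(1) by blast
    then show False using g by simp
  next
    case False
    have nz: "g [^] (m::int) \<noteq> \<one>" if "m \<noteq> 0" for m
    proof
      assume eq: "g [^] m = \<one>"
      show False
      proof (cases "m > 0")
        case True
        then have e1: "g [^] (nat m) = \<one>" using eq by (metis int_pow_int zero_less_imp_eq_int nat_int)
        have "0 < nat m" using True by simp
        then show False using False e1 by blast
      next
        case nT: False
        then have "m = - int (nat (- m))" by simp
        then have "inv (g [^] (nat (- m))) = \<one>" using eq g by (metis int_pow_neg_int)
        then have e1: "g [^] (nat (- m)) = \<one>" using g by simp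
        have "0 < nat (- m)" using nT that by simp
        then show False using False e1 by blast
      qed
    qed
    define E where "E = {x \<in> carrier G. \<exists>k. even k \<and> x \<in> Q k}"
    have EC: "E \<subseteq> carrier G" unfolding E_def by blast
    have "E \<in> p \<or> carrier G - E \<in> p" using uf_compl[OF uf EC] by blast
    then show False
    proof
      assume Ep: "E \<in> p"
      obtain y where y: "y \<in> E" "y \<in> g <# E" using nodisj[OF Ep] by blast
      obtain x where x: "x \<in> E" "y = g \<otimes> x" using lc[OF y(2)] by blast
      obtain k where k: "even k" "x \<in> Q k" using x(1) unfolding E_def by blast
      obtain k' where k': "even k'" "y \<in> Q k'" using y(1) unfolding E_def by blast
      have "y \<in> Q (k + 1)" using shift[OF k(2)] x(2) by simp
      then have "g [^] (k + 1 - k') = \<one>" using disj k'(2) by blast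
      moreover have "k + 1 - k' \<noteq> 0" using k(1) k'(1) by presburger
      ultimately show False using nz by blast
    next
      assume Ep: "carrier G - E \<in> p"
      obtain y where y: "y \<in> carrier G - E" "y \<in> g <# (carrier G - E)" using nodisj[OF Ep] by blast
      obtain x where x: "x \<in> carrier G - E" "y = g \<otimes> x" using lc[OF y(2)] by blast
      obtain k where k: "x \<in> Q k" using cover x(1) by blast
      have "odd k" using k x(1) unfolding E_def by blast
      then have "even (k + 1)" by simp
      moreover have "y \<in> Q (k + 1)" using shift[OF k] x(2) by simp
      ultimately have "y \<in> E" using y(1) unfolding E_def by blast
      then show False using y(1) by blast
    qed
  qed
qed



lemma (in group) uf_lmult_mult:
  assumes uf: "ultrafilter_on G p" and a: "a \<in> carrier G" and b: "b \<in> carrier G"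
  shows "uf_lmult G a (uf_lmult G b p) = uf_lmult G (a \<otimes> b) p"
proof -
  have "a <# (b <# P) = (a \<otimes> b) <# P" if "P \<in> p" for P
    using lcos_m_assoc[OF uf_sub[OF uf that] a b] .
  then show ?thesis unfolding uf_lmult_def image_image by (intro image_cong) auto
qed

lemma (in group) uf_lmult_one:
  assumes uf: "ultrafilter_on G p"
  shows "uf_lmult G \<one> p = p"
proof -
  have "\<one> <# P = P" if "P \<in> p" for P using lcos_mult_one[OF uf_sub[OF uf that]] .
  then show ?thesis unfolding uf_lmult_def by simp
qed

lemma (in group) uf_lmult_inj:
  assumes uf: "ultrafilter_on G p"
  shows "inj_on (\<lambda>x. uf_lmult G x p) (carrier G)"
proof (rule inj_onI)
  fix x y assume x: "x \<in> carrier G" and y: "y \<in> carrier G" and eq: "uf_lmult G x p = uf_lmult G y p"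
  have "uf_lmult G (inv y) (uf_lmult G x p) = uf_lmult G (inv y) (uf_lmult G y p)" using eq by simp
  then have "uf_lmult G (inv y \<otimes> x) p = uf_lmult G (inv y \<otimes> y) p"
    using uf_lmult_mult[OF uf] x y by simp
  then have fx: "uf_lmult G (inv y \<otimes> x) p = p" using uf_lmult_one[OF uf] y by simp
  have "inv y \<otimes> x = \<one>"
  proof (rule ccontr)
    assume ne: "inv y \<otimes> x \<noteq> \<one>"
    have "inv y \<otimes> x \<in> carrier G" using x y by simp
    then show False by (rule uf_stab[OF uf _ ne fx])
  qed
  then show "x = y" using inv_solve_left'[of "\<one>" y x] x y by simp
qed

lemma (in group) rcos_inv_mem:
  assumes "B \<subseteq> carrier G" "b \<in> carrier G" "x \<in> carrier G"
  shows "x \<in> B #> inv b \<longleftrightarrow> x \<otimes> b \<in> B"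
  using rcos_mem_iff[OF assms(1) _ assms(3), of "inv b"] assms by simp

lemma (in group) lcos_inv_mem:
  assumes "B \<subseteq> carrier G" "b \<in> carrier G" "x \<in> carrier G"
  shows "b \<in> inv x <# B \<longleftrightarrow> x \<otimes> b \<in> B"
  using lcos_mem_iff[OF assms(1) _ assms(2), of "inv x"] assms by simp

lemma (in group) part3:
  assumes Cinf: "infinite (carrier G)" and A: "A \<subseteq> carrier G"
  shows "scattered G A \<longleftrightarrow>
            (\<forall>B. B \<subseteq> A \<and> B \<noteq> {} \<longrightarrow>
               (\<exists>Y. finite Y \<and> Y \<subseteq> carrier G \<and>
                  chi G Y \<in> (PG G) closure_of
                     (chi G ` {B #> inv b | b. b \<in> B})))"
proof
  assume sc: "scattered G A"
  show "\<forall>B. B \<subseteq> A \<and> B \<noteq> {} \<longrightarrow> (\<exists>Y. finite Y \<and> Y \<subseteq> carrier G \<and>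
                  chi G Y \<in> (PG G) closure_of (chi G ` {B #> inv b | b. b \<in> B}))"
  proof (intro allI impI)
    fix B assume B: "B \<subseteq> A \<and> B \<noteq> {}"
    have BC: "B \<subseteq> carrier G" using B A by blast
    have sub: "chi G ` {B #> inv b | b. b \<in> B} \<subseteq> topspace (PG G)" using chi_in by blast
    show "\<exists>Y. finite Y \<and> Y \<subseteq> carrier G \<and>
                  chi G Y \<in> (PG G) closure_of (chi G ` {B #> inv b | b. b \<in> B})"
    proof (cases "finite B")
      case True
      from B obtain b where b: "b \<in> B" by blast
      have bC: "b \<in> carrier G" using b BC by blast
      have "B #> inv b = (\<lambda>h. h \<otimes> inv b) ` B" unfolding r_coset_def by blast
      then have "finite (B #> inv b)" using True by simp
      moreover have "B #> inv b \<subseteq> carrier G" using r_coset_subset_G[OF BC] bC by simp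
      moreover have "chi G (B #> inv b) \<in> (PG G) closure_of (chi G ` {B #> inv b | b. b \<in> B})"
        using closure_of_subset[OF sub] b by blast
      ultimately show ?thesis by blast
    next
      case False
      have "B \<subseteq> A \<and> infinite B" using B False by blast
      then have "\<exists>p. free_ultrafilter_on G p \<and> B \<in> p \<and> finite (Delta G p B)"
        using sc unfolding scattered_def by blast
      then obtain p where p: "free_ultrafilter_on G p" "B \<in> p" "finite (Delta G p B)"
        by blast
      have uf: "ultrafilter_on G p" using p(1) by (simp add: free_ultrafilter_on_def)
      define Y where "Y = {x \<in> carrier G. {b \<in> carrier G. x \<in> B #> inv b} \<in> p}"
      have YC: "Y \<subseteq> carrier G" unfolding Y_def by blast
      have clo: "chi G Y \<in> (PG G) closure_of (chi G ` {B #> inv b | b. b \<in> B})"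
        unfolding in_closure_of
      proof (intro conjI chi_in allI impI)
        fix T assume T: "chi G Y \<in> T \<and> openin (PG G) T"
        then obtain K where K: "finite K" "K \<subseteq> carrier G" "Nb G (chi G Y) K \<subseteq> T"
          using Nb_base[OF conjunct2[OF T] conjunct1[OF T]] by blast
        have "{b \<in> carrier G. \<forall>k\<in>K. (k \<in> B #> inv b \<longleftrightarrow> k \<in> Y)} \<in> p"
          unfolding Y_def by (rule uf_lim[OF uf K(1,2)])
        then have "{b \<in> carrier G. \<forall>k\<in>K. (k \<in> B #> inv b \<longleftrightarrow> k \<in> Y)} \<inter> B \<in> p"
          using uf_int[OF uf _ p(2)] by blast
        then have "{b \<in> carrier G. \<forall>k\<in>K. (k \<in> B #> inv b \<longleftrightarrow> k \<in> Y)} \<inter> B \<noteq> {}"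
          by (rule uf_ne[OF uf])
        then obtain b where b: "b \<in> B" "\<forall>k\<in>K. (k \<in> B #> inv b \<longleftrightarrow> k \<in> Y)" by blast
        have "chi G (B #> inv b) \<in> T" using b(2) chi_Nb[OF K(2)] K(3) by blast
        moreover have "chi G (B #> inv b) \<in> chi G ` {B #> inv b | b. b \<in> B}" using b(1) by blast
        ultimately show "\<exists>y. y \<in> chi G ` {B #> inv b | b. b \<in> B} \<and> y \<in> T" by blast
      qed
      have "(\<lambda>x. uf_lmult G x p) ` Y \<subseteq> Delta G p B"
      proof
        fix q assume "q \<in> (\<lambda>x. uf_lmult G x p) ` Y"
        then obtain x where x: "x \<in> Y" "q = uf_lmult G x p" by blast
        have xC: "x \<in> carrier G" using x YC by blast
        have "{b \<in> carrier G. x \<in> B #> inv b} = inv x <# B"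
        proof (intro Set.set_eqI iffI)
          fix b assume "b \<in> {b \<in> carrier G. x \<in> B #> inv b}"
          then show "b \<in> inv x <# B" using rcos_inv_mem[OF BC _ xC] lcos_inv_mem[OF BC _ xC] by auto
        next
          fix b assume b: "b \<in> inv x <# B"
          have "inv x <# B \<subseteq> carrier G" using l_coset_subset_G[OF BC] xC by simp
          then have bC: "b \<in> carrier G" using b by blast
          then show "b \<in> {b \<in> carrier G. x \<in> B #> inv b}"
            using b rcos_inv_mem[OF BC bC xC] lcos_inv_mem[OF BC bC xC] by auto
        qed
        then have ip: "inv x <# B \<in> p" using x unfolding Y_def by simp
        have "x <# (inv x <# B) = B" using lcos_m_assoc[OF BC xC] lcos_mult_one[OF BC] xC by simp
        then have "B \<in> uf_lmult G x p" using ip unfolding uf_lmult_def by force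
        then show "q \<in> Delta G p B" using x xC unfolding Delta_def by blast
      qed
      then have "finite ((\<lambda>x. uf_lmult G x p) ` Y)" using p(3) by (rule finite_subset)
      then have "finite Y" by (rule finite_imageD[OF _ inj_on_subset[OF uf_lmult_inj[OF uf] YC]])
      then show ?thesis using YC clo by blast
    qed
  qed
next
  assume H: "\<forall>B. B \<subseteq> A \<and> B \<noteq> {} \<longrightarrow> (\<exists>Y. finite Y \<and> Y \<subseteq> carrier G \<and>
                  chi G Y \<in> (PG G) closure_of (chi G ` {B #> inv b | b. b \<in> B}))"
  show "scattered G A"
    unfolding scattered_def
  proof (intro allI impI)
    fix S assume S: "S \<subseteq> A \<and> infinite S"
    have SC: "S \<subseteq> carrier G" using S A by blast
    have "S \<noteq> {}" using S by auto
    then obtain Y where Y: "finite Y" "Y \<subseteq> carrier G"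
      "chi G Y \<in> (PG G) closure_of (chi G ` {S #> inv s | s. s \<in> S})"
      using H S by blast
    define P where "P K = {s \<in> S. \<forall>k\<in>K. (k \<in> S #> inv s \<longleftrightarrow> k \<in> Y)}" for K
    have Pne: "P K \<noteq> {}" if K: "finite K" "K \<subseteq> carrier G" for K
    proof -
      have "openin (PG G) (Nb G (chi G Y) K)" using K by (intro Nb_open chi_in) auto
      moreover have "chi G Y \<in> Nb G (chi G Y) K" by (intro Nb_self chi_in)
      ultimately obtain z where z: "z \<in> chi G ` {S #> inv s | s. s \<in> S}" "z \<in> Nb G (chi G Y) K"
        using Y(3) unfolding in_closure_of by blast
      then obtain s where s: "s \<in> S" "z = chi G (S #> inv s)" by blast
      then have "\<forall>k\<in>K. (k \<in> S #> inv s \<longleftrightarrow> k \<in> Y)" using z(2) chi_Nb[OF K(2)] by blast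
      then show ?thesis using s(1) unfolding P_def by blast
    qed
    have Pinf: "infinite (P K)" if K: "finite K" "K \<subseteq> carrier G" for K
    proof
      assume fin: "finite (P K)"
      have ex: "\<exists>k. k \<in> carrier G \<and> k \<in> S #> inv s \<and> k \<notin> Y" if s: "s \<in> P K" for s
      proof -
        have sC: "s \<in> carrier G" using s SC unfolding P_def by blast
        have "S #> inv s = (\<lambda>h. h \<otimes> inv s) ` S" unfolding r_coset_def by blast
        moreover have "inj_on (\<lambda>h. h \<otimes> inv s) S"
        proof (rule inj_onI)
          fix u v assume uv: "u \<in> S" "v \<in> S" "u \<otimes> inv s = v \<otimes> inv s"
          have "u \<in> carrier G" "v \<in> carrier G" using uv SC by auto
          then show "u = v" using uv(3) right_cancel[of "inv s" u v] sC by simp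
        qed
        ultimately have "infinite (S #> inv s)" using S finite_imageD by metis
        then have "infinite ((S #> inv s) - Y)" using Y(1) by (rule Diff_infinite_finite[rotated])
        then obtain k where "k \<in> (S #> inv s) - Y" by (metis finite.emptyI ex_in_conv)
        moreover have "S #> inv s \<subseteq> carrier G" using r_coset_subset_G[OF SC] sC by simp
        ultimately show ?thesis by blast
      qed
      define kk where "kk s = (SOME k. k \<in> carrier G \<and> k \<in> S #> inv s \<and> k \<notin> Y)" for s
      have kk: "kk s \<in> carrier G \<and> kk s \<in> S #> inv s \<and> kk s \<notin> Y" if "s \<in> P K" for s
        unfolding kk_def using ex[OF that] by (rule someI_ex)
      define K' where "K' = K \<union> kk ` P K"
      have K': "finite K'" "K' \<subseteq> carrier G" using K fin kk unfolding K'_def by auto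
      have "P K' = {}"
      proof (rule ccontr)
        assume "P K' \<noteq> {}"
        then obtain s where s: "s \<in> P K'" by blast
        then have sK: "s \<in> P K" unfolding P_def K'_def by blast
        then have "kk s \<in> K'" unfolding K'_def by blast
        then have "kk s \<in> S #> inv s \<longleftrightarrow> kk s \<in> Y" using s unfolding P_def by blast
        then show False using kk[OF sK] by blast
      qed
      then show False using Pne[OF K'] by blast
    qed
    define DD where "DD = insert S (P ` {K. finite K \<and> K \<subseteq> carrier G})"
    have "\<exists>p. free_ultrafilter_on G p \<and> DD \<subseteq> p"
    proof (rule uf_exists)
      show "DD \<subseteq> Pow (carrier G)" using SC unfolding DD_def P_def by blast
      fix SS assume SS: "finite SS" "SS \<subseteq> DD"
      have "SS - {S} \<subseteq> P ` {K. finite K \<and> K \<subseteq> carrier G}" using SS(2) unfolding DD_def by blast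
      moreover have "finite (SS - {S})" using SS(1) by simp
      ultimately obtain KK where KK: "KK \<subseteq> {K. finite K \<and> K \<subseteq> carrier G}" "finite KK" "SS - {S} = P ` KK"
        by (meson finite_subset_image)
      define Ks where "Ks = \<Union>KK"
      have Ks: "finite Ks" "Ks \<subseteq> carrier G" using KK unfolding Ks_def by auto
      have "P Ks \<subseteq> carrier G \<inter> \<Inter>SS"
      proof
        fix s assume s: "s \<in> P Ks"
        have "s \<in> carrier G" "s \<in> S" using s SC unfolding P_def by auto
        moreover have "s \<in> P K" if "K \<in> KK" for K
          using s that unfolding P_def Ks_def by blast
        ultimately show "s \<in> carrier G \<inter> \<Inter>SS" using KK(3) by blast
      qed
      then show "infinite (carrier G \<inter> \<Inter>SS)" using Pinf[OF Ks] infinite_super by blast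
    qed
    then obtain p where p: "free_ultrafilter_on G p" "DD \<subseteq> p" by blast
    have uf: "ultrafilter_on G p" using p(1) by (simp add: free_ultrafilter_on_def)
    have Sp: "S \<in> p" using p(2) unfolding DD_def by blast
    have "Delta G p S \<subseteq> (\<lambda>x. uf_lmult G x p) ` Y"
    proof
      fix q assume "q \<in> Delta G p S"
      then obtain g where g: "q = uf_lmult G g p" "g \<in> carrier G" "S \<in> uf_lmult G g p"
        unfolding Delta_def by blast
      obtain P0 where P0: "P0 \<in> p" "S = g <# P0" using g(3) unfolding uf_lmult_def by blast
      have P0C: "P0 \<subseteq> carrier G" using uf_sub[OF uf P0(1)] .
      have eqS: "inv g <# S = P0"
      proof -
        have "inv g <# S = (inv g \<otimes> g) <# P0" using P0(2) lcos_m_assoc[OF P0C, of "inv g" g] g(2) by simp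
        also have "\<dots> = P0" using lcos_mult_one[OF P0C] g(2) by simp
        finally show ?thesis .
      qed
      have ip: "inv g <# S \<in> p" unfolding eqS by (rule P0(1))
      have "g \<in> Y"
      proof (rule ccontr)
        assume gY: "g \<notin> Y"
        have "{g} \<in> {K. finite K \<and> K \<subseteq> carrier G}" using g(2) by simp
        then have "P {g} \<in> DD" unfolding DD_def by (intro insertI2 imageI)
        then have "P {g} \<in> p" using p(2) by (rule subsetD[rotated])
        moreover have "P {g} \<inter> (inv g <# S) = {}"
        proof (intro Set.equals0I)
          fix s assume s: "s \<in> P {g} \<inter> (inv g <# S)"
          have sC: "s \<in> carrier G" using s SC unfolding P_def by blast
          have "s \<in> P {g}" using s by blast
          then have "(g \<in> S #> inv s \<longleftrightarrow> g \<in> Y)" unfolding P_def by simp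
          then have "g \<notin> S #> inv s" using gY by simp
          then have "g \<otimes> s \<notin> S" using rcos_inv_mem[OF SC sC g(2)] by simp
          moreover have "g \<otimes> s \<in> S" using s lcos_inv_mem[OF SC sC g(2)] by blast
          ultimately show False by blast
        qed
        ultimately show False using uf_ne[OF uf uf_int[OF uf _ ip]] by blast
      qed
      then show "q \<in> (\<lambda>x. uf_lmult G x p) ` Y" using g(1) by blast
    qed
    then have "finite (Delta G p S)" using Y(1) finite_subset by blast
    then show "\<exists>p. free_ultrafilter_on G p \<and> S \<in> p \<and> finite (Delta G p S)" using p(1) Sp by blast
  qed
qed


theorem theorem4p2:
  fixes G :: "('a, 'b) monoid_scheme" and A :: "'a set"
  assumes "group G" and "infinite (carrier G)" and "A \<subseteq> carrier G"
  shows "(\<forall>n::nat. n_thin G n A \<longleftrightarrow> (\<forall>Y\<in>Wset G A. finite Y \<and> card Y \<le> n))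
       \<and> (sparse G A \<longleftrightarrow> (\<forall>Y\<in>Wset G A. finite Y))
       \<and> (scattered G A \<longleftrightarrow>
            (\<forall>B. B \<subseteq> A \<and> B \<noteq> {} \<longrightarrow>
               (\<exists>Y. finite Y \<and> Y \<subseteq> carrier G \<and>
                  chi G Y \<in> (PG G) closure_of
                     (chi G ` {B #>\<^bsub>G\<^esub> inv\<^bsub>G\<^esub> b | b. b \<in> B}))))"
proof -
  interpret group G by fact
  show ?thesis
  proof (intro conjI allI)
    fix n :: nat
    show "n_thin G n A \<longleftrightarrow> (\<forall>Y\<in>Wset G A. finite Y \<and> card Y \<le> n)"
      by (rule part1[OF assms(2,3)])
    show "sparse G A \<longleftrightarrow> (\<forall>Y\<in>Wset G A. finite Y)"
      by (rule part2[OF assms(2,3)])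
  next
    show "scattered G A \<longleftrightarrow>
            (\<forall>B. B \<subseteq> A \<and> B \<noteq> {} \<longrightarrow>
               (\<exists>Y. finite Y \<and> Y \<subseteq> carrier G \<and>
                  chi G Y \<in> (PG G) closure_of
                     (chi G ` {B #>\<^bsub>G\<^esub> inv\<^bsub>G\<^esub> b | b. b \<in> B})))"
      by (rule part3[OF assms(2,3)])
  qed
qed

end
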